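(* Let $\alpha\in(0,2)$, $a>0$, and let $\sigma:\mathbb{R}^2\times[0,\infty)\to\mathbb{R}$ be a measurable function satisfying the boundedness condition: there is $C$ with $|\sigma(x,t)|\le C$ for all $t\ge0$, $x\in\mathbb{R}^2$. For $x,y\in\mathbb{R}^2$ and $t\ge0$ define \[ G(x,y,t)=\frac{1}{2\pi a}\int_0^{t-\frac{|x-y|}{a}}\frac{\sigma(y,\tau)}{\sqrt{a^2(t-\tau)^2-|y-x|^2}}\,d\tau\;\mathbf{1}_{\{|x-y|<at\}}. \] Then for every $t\ge0$ and $x\in\mathbb{R}^2$ the stochastic integral \[ U(x,t)=\iint_{\mathbb{R}^2}G(x,y,t)\,M(dy) \] with respect to a symmetric $\alpha$-stable random measure $M$ on $\mathbb{R}^2$ with Lebesgue control measure is well defined, i.e. $\iint_{\mathbb{R}^2}|G(x,y,t)|^\alpha\,dy<\infty$.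
   Context: An independently scattered symmetric $\alpha$-stable (S$\alpha$S) random measure $M$ on $\mathbb{R}^2$ with Lebesgue control measure is a random set function on Borel sets $A$ of finite Lebesgue measure $\lambda_2(A)$ such that $M(A)$ is S$\alpha$S with characteristic function $E e^{i\lambda M(A)}=e^{-\lambda_2(A)|\lambda|^\alpha}$, values on disjoint sets are independent, and $M$ is countably additive almost surely. For $f\in L^\alpha(\mathbb{R}^2)$, the integral $\iint f(x)M(dx)$ is defined as the limit in probability of integrals of simple compactly supported functions; it is well defined precisely for $f\in L^\alpha(\mathbb{R}^2)$. *)

theory Defs
  imports "HOL-Analysis.Analysis"
begin

definition Gker :: "real \<Rightarrow> (real^2 \<Rightarrow> real \<Rightarrow> real) \<Rightarrow> real^2 \<Rightarrow> real^2 \<Rightarrow> real \<Rightarrow> real" where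
  "Gker a \<sigma> x y t =
     (1 / (2 * pi * a)) *
     (LBINT \<tau>=0..(t - norm (x - y) / a).
        \<sigma> y \<tau> / sqrt (a\<^sup>2 * (t - \<tau>)\<^sup>2 - (norm (y - x))\<^sup>2))
     * indicator {p. norm (fst p - snd p) < a * t} (x, y)"

end

theory Submission
  imports Defs
begin

lemma dyadic_term:
  fixes R K \<beta> \<gamma> :: real and k :: nat
  assumes "0 < R"
  shows "(R/2^(k+1)) powr (-\<beta>) * (K * (R/2^k) powr \<gamma>) = K * 2 powr \<beta> * R powr (\<gamma> - \<beta>) * (2 powr (\<beta> - \<gamma>))^k"
proof -
  have p1: "(2::real)^(k+1) = 2 powr real (k+1)" by (metis powr_realpow zero_less_numeral)
  have p2: "(2::real)^k = 2 powr real k" by (metis powr_realpow zero_less_numeral)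
  have a: "(R/2^(k+1)) powr (-\<beta>) = R powr (-\<beta>) * 2 powr (\<beta> * (k+1))"
    unfolding p1 using assms by (simp add: powr_divide powr_powr powr_minus divide_simps mult.commute)
  have b: "(R/2^k) powr \<gamma> = R powr \<gamma> * 2 powr (- \<gamma> * k)"
    unfolding p2 using assms by (simp add: powr_divide powr_powr powr_minus divide_simps mult.commute)
  have c: "(2 powr (\<beta> - \<gamma>))^k = 2 powr ((\<beta> - \<gamma>) * k)"
    by (simp add: powr_realpow[symmetric] powr_powr)
  have d: "R powr (\<gamma> - \<beta>) = R powr (-\<beta>) * R powr \<gamma>"
    by (simp add: powr_add[symmetric])
  have e: "2 powr (\<beta> * (k+1)) * 2 powr (- \<gamma> * k) = 2 powr \<beta> * 2 powr ((\<beta> - \<gamma>) * k)"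
    by (simp add: powr_add[symmetric] algebra_simps)
  show ?thesis unfolding a b c d using e by (simp add: algebra_simps)
qed

lemma single_le_suminf_ennreal: "(f i::ennreal) \<le> suminf f"
  using sum_le_suminf[OF summableI, of "{i}" f] by simp

lemma dyadic:
  fixes M :: "'a measure" and d :: "'a \<Rightarrow> real"
  assumes b: "0 \<le> \<beta>" "\<beta> < \<gamma>" and R: "0 < R" and K: "0 \<le> K"
   and dm[measurable]: "d \<in> borel_measurable M"
   and em: "\<And>\<rho>. 0 < \<rho> \<Longrightarrow> \<rho> \<le> R \<Longrightarrow> emeasure M {y\<in>space M. 0 < d y \<and> d y \<le> \<rho>} \<le> ennreal (K * \<rho> powr \<gamma>)"
  shows "(\<integral>\<^sup>+y. (if 0 < d y \<and> d y \<le> R then ennreal (d y powr (-\<beta>)) else 0) \<partial>M)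
     \<le> ennreal (\<Sum>k. K * 2 powr \<beta> * R powr (\<gamma> - \<beta>) * (2 powr (\<beta> - \<gamma>))^k)"
proof -
  define E where "E k = {y\<in>space M. 0 < d y \<and> d y \<le> R / 2^k}" for k :: nat
  define c where "c k = (R/2^(k+1)) powr (-\<beta>)" for k :: nat
  have Em[measurable]: "E k \<in> sets M" for k unfolding E_def by measurable
  have pw: "(if 0 < d y \<and> d y \<le> R then ennreal (d y powr (-\<beta>)) else 0)
      \<le> (\<Sum>k. ennreal (c k) * indicator (E k) y)" if y: "y \<in> space M" for y
  proof (cases "0 < d y \<and> d y \<le> R")
    case True
    obtain n where n: "R / d y < 2^n"
      using real_arch_pow[of 2 "R / d y"] by auto
    have Pn: "R / 2^n < d y" using n True
      by (simp add: divide_less_eq mult.commute)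
    have P0: "\<not> R / 2^0 < d y" using True by simp
    obtain k where k: "\<forall>i\<le>k. \<not> R / 2^i < d y" "R / 2^(Suc k) < d y"
      using ex_least_nat_less[of "\<lambda>n. R / 2^n < d y", OF Pn P0] by auto
    have yE: "y \<in> E k" using k(1) True y unfolding E_def by (auto simp: not_less)
    have "d y powr (-\<beta>) \<le> c k"
      unfolding c_def using k(2) b R by (intro powr_mono2') auto
    then have "ennreal (d y powr (-\<beta>)) \<le> ennreal (c k) * indicator (E k) y"
      using yE by (simp add: ennreal_leI)
    also have "\<dots> \<le> (\<Sum>k. ennreal (c k) * indicator (E k) y)"
      by (rule single_le_suminf_ennreal)
    finally show ?thesis using True by simp
  qed auto
  have "(\<integral>\<^sup>+y. (if 0 < d y \<and> d y \<le> R then ennreal (d y powr (-\<beta>)) else 0) \<partial>M)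
      \<le> (\<integral>\<^sup>+y. (\<Sum>k. ennreal (c k) * indicator (E k) y) \<partial>M)"
    by (rule nn_integral_mono) (rule pw)
  also have "\<dots> = (\<Sum>k. \<integral>\<^sup>+y. ennreal (c k) * indicator (E k) y \<partial>M)"
    by (rule nn_integral_suminf) measurable
  also have "\<dots> = (\<Sum>k. ennreal (c k) * emeasure M (E k))"
    by (simp add: nn_integral_cmult_indicator)
  also have "\<dots> \<le> (\<Sum>k. ennreal (K * 2 powr \<beta> * R powr (\<gamma> - \<beta>) * (2 powr (\<beta> - \<gamma>))^k))"
  proof (rule suminf_le[OF _ summableI summableI])
    fix k :: nat
    have "emeasure M (E k) \<le> ennreal (K * (R/2^k) powr \<gamma>)"
      unfolding E_def using R by (intro em) (auto simp: divide_le_eq)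
    then have "ennreal (c k) * emeasure M (E k) \<le> ennreal (c k) * ennreal (K * (R/2^k) powr \<gamma>)"
      by (rule mult_left_mono) simp
    also have "\<dots> = ennreal (c k * (K * (R/2^k) powr \<gamma>))"
      unfolding c_def by (rule ennreal_mult[symmetric]) (use K in auto)
    also have "c k * (K * (R/2^k) powr \<gamma>) = K * 2 powr \<beta> * R powr (\<gamma> - \<beta>) * (2 powr (\<beta> - \<gamma>))^k"
      unfolding c_def using R by (rule dyadic_term)
    finally show "ennreal (c k) * emeasure M (E k) \<le> ennreal (K * 2 powr \<beta> * R powr (\<gamma> - \<beta>) * (2 powr (\<beta> - \<gamma>))^k)" .
  qed
  also have "\<dots> = ennreal (\<Sum>k. K * 2 powr \<beta> * R powr (\<gamma> - \<beta>) * (2 powr (\<beta> - \<gamma>))^k)"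
  proof (rule suminf_ennreal2)
    show "0 \<le> K * 2 powr \<beta> * R powr (\<gamma> - \<beta>) * (2 powr (\<beta> - \<gamma>))^k" for k
      using K by simp
    have "2 powr (\<beta> - \<gamma>) < 2 powr 0" using b by (intro powr_less_mono) auto
    then have "norm (2 powr (\<beta> - \<gamma>)) < (1::real)" by simp
    then show "summable (\<lambda>k. K * 2 powr \<beta> * R powr (\<gamma> - \<beta>) * (2 powr (\<beta> - \<gamma>))^k)"
      by (intro summable_mult summable_geometric)
  qed
  finally show ?thesis .
qed

lemma einterval0: "einterval 0 (ereal u) = {0<..<u}"
  by (metis einterval_eq_Icc zero_ereal_def)

lemma G_measurable:
  fixes a t :: real and \<sigma> :: "real^2 \<Rightarrow> real \<Rightarrow> real" and x :: "real^2"
  assumes "0 < a"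
    and sm: "(\<lambda>p. \<sigma> (fst p) (snd p)) \<in> borel_measurable (restrict_space borel (UNIV \<times> {0..}))"
  shows "(\<lambda>y. Gker a \<sigma> x y t) \<in> borel_measurable lborel"
proof -
  define g where "g p = indicator (UNIV \<times> {0..}) p *\<^sub>R \<sigma> (fst p) (snd p)" for p :: "(real^2) \<times> real"
  have Om: "UNIV \<times> {0..} \<in> sets (borel :: ((real^2) \<times> real) measure)"
    by (intro borel_closed closed_Times) auto
  have gm: "g \<in> borel_measurable borel"
    using sm Om unfolding g_def
    by (subst (asm) borel_measurable_restrict_space_iff) auto
  define F where "F y \<tau> = indicator {p. norm (x - fst p) < a*t \<and> 0 < snd p \<and> snd p < t - norm (x - fst p)/a} (y,\<tau>)
       * (g (y,\<tau>) / sqrt (a\<^sup>2 * (t - \<tau>)\<^sup>2 - (norm (y - x))\<^sup>2))" for y \<tau>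
  have gm2[measurable]: "g \<in> borel_measurable (lborel \<Otimes>\<^sub>M lborel)"
    unfolding lborel_prod using gm by (simp add: measurable_lborel1)
  have Fm2: "case_prod F \<in> borel_measurable (lborel \<Otimes>\<^sub>M lborel)"
    unfolding F_def case_prod_beta' by measurable
  have eq: "Gker a \<sigma> x y t = (1 / (2 * pi * a)) * (LINT \<tau>|lborel. F y \<tau>)" for y
  proof (cases "norm (x - y) < a * t")
    case True
    then have U: "0 < t - norm (x - y) / a" using \<open>0 < a\<close> by (simp add: field_simps)
    have "(LBINT \<tau>=0..(t - norm (x - y) / a). \<sigma> y \<tau> / sqrt (a\<^sup>2 * (t - \<tau>)\<^sup>2 - (norm (y - x))\<^sup>2))
        = (LINT \<tau>|lborel. F y \<tau>)"
      using U True unfolding interval_lebesgue_integral_def set_lebesgue_integral_def einterval0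
      by (simp, intro Bochner_Integration.integral_cong) (auto simp: F_def g_def indicator_def)
    then show ?thesis using True unfolding Gker_def by simp
  next
    case False
    then have "F y = (\<lambda>_. 0)" by (auto simp: F_def fun_eq_iff)
    then show ?thesis using False unfolding Gker_def by simp
  qed
  show ?thesis unfolding eq
    using lborel.borel_measurable_lebesgue_integral[OF Fm2] by measurable
qed

lemma norm_integral_le_nn:
  fixes h :: "real \<Rightarrow> real"
  shows "ennreal (norm (integral\<^sup>L M h)) \<le> (\<integral>\<^sup>+ \<tau>. ennreal (norm (h \<tau>)) \<partial>M)"
proof (cases "integrable M h")
  case True then show ?thesis by (rule integral_norm_bound_ennreal)
next
  case False then show ?thesis by (simp add: not_integrable_integral_eq)
qed

lemma G_bound1:
  fixes a t C r :: real and \<sigma> :: "real^2 \<Rightarrow> real \<Rightarrow> real" and x y :: "real^2"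
  assumes a: "0 < a" and sb: "\<forall>x t. t \<ge> 0 \<longrightarrow> \<bar>\<sigma> x t\<bar> \<le> C"
    and r: "r = norm (x - y)" "0 < r" "r < a * t"
  shows "\<bar>Gker a \<sigma> x y t\<bar> \<le> (1 / (2 * pi * a)) * (C / sqrt (2 * r)) *
     (\<Sum>k. (1/a) * 2 powr (1/2) * (a*t+1) powr (1 - 1/2) * (2 powr (1/2 - 1))^k)"
proof -
  define B where "B = (\<Sum>k. (1/a) * 2 powr (1/2) * (a*t+1) powr (1 - 1/2) * (2 powr (1/2 - 1))^k)"
  have "norm (2 powr (1/2 - 1) :: real) < 1"
  proof -
    have "(2::real) powr (1/2 - 1) < 2 powr 0" by (intro powr_less_mono) auto
    then show ?thesis by simp
  qed
  then have B0: "0 \<le> B" unfolding B_def using a r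
    by (intro suminf_nonneg summable_mult summable_geometric) auto
  have C0: "0 \<le> C" using sb by (metis abs_ge_zero order.trans order_refl)
  define U where "U = t - r / a"
  have U: "0 < U" using r a by (simp add: U_def field_simps)
  define f where "f \<tau> = \<sigma> y \<tau> / sqrt (a\<^sup>2 * (t - \<tau>)\<^sup>2 - (norm (y - x))\<^sup>2)" for \<tau>
  have G: "Gker a \<sigma> x y t = (1 / (2 * pi * a)) * (LINT \<tau>|lborel. indicator {0<..<U} \<tau> *\<^sub>R f \<tau>)"
    using U r unfolding Gker_def interval_lebesgue_integral_def set_lebesgue_integral_def einterval0 U_def f_def
    by simp
  define d where "d \<tau> = (if 0 < \<tau> \<and> \<tau> < U then a*(t-\<tau>) - r else 0)" for \<tau>
  have dm[measurable]: "d \<in> borel_measurable lborel" unfolding d_def by measurable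
  have pw: "ennreal (norm (indicator {0<..<U} \<tau> *\<^sub>R f \<tau>)) \<le>
      ennreal (C / sqrt (2*r)) * (if 0 < d \<tau> \<and> d \<tau> \<le> a*t+1 then ennreal (d \<tau> powr (-(1/2))) else 0)" for \<tau>
  proof (cases "0 < \<tau> \<and> \<tau> < U")
    case True
    define v where "v = a*(t-\<tau>) - r"
    have dv: "d \<tau> = v" using True by (simp add: d_def v_def)
    have v0: "0 < v" using True a by (simp add: v_def U_def field_simps)
    have "0 < a*\<tau>" using True a by simp
    then have v1: "v \<le> a*t+1" using r by (simp add: v_def algebra_simps)
    have Q: "a\<^sup>2 * (t - \<tau>)\<^sup>2 - (norm (y - x))\<^sup>2 = v * (v + 2*r)"
      using r by (simp add: v_def norm_minus_commute power2_eq_square algebra_simps)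
    have "2*r * v \<le> v * (v + 2*r)" using v0 by (simp add: algebra_simps)
    then have sq: "sqrt (2*r) * sqrt v \<le> sqrt (v * (v + 2*r))"
      by (metis real_sqrt_le_mono real_sqrt_mult mult.commute mult.assoc)
    have pos: "0 < sqrt (2*r) * sqrt v" using v0 r by simp
    have "\<bar>f \<tau>\<bar> = \<bar>\<sigma> y \<tau>\<bar> / sqrt (v * (v + 2*r))" unfolding f_def Q
      using v0 r by (simp add: abs_div)
    also have "\<dots> \<le> C / (sqrt (2*r) * sqrt v)"
      using sb True sq pos C0 by (intro frac_le) auto
    also have "\<dots> = C / sqrt (2*r) * v powr (-(1/2))"
      using v0 by (simp add: powr_minus powr_half_sqrt divide_simps)
    finally have fb: "\<bar>f \<tau>\<bar> \<le> C / sqrt (2*r) * v powr (-(1/2))" .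
    have "ennreal (norm (indicator {0<..<U} \<tau> *\<^sub>R f \<tau>)) = ennreal \<bar>f \<tau>\<bar>"
      using True by simp
    also have "\<dots> \<le> ennreal (C / sqrt (2*r) * v powr (-(1/2)))" using fb by (rule ennreal_leI)
    also have "\<dots> = ennreal (C / sqrt (2*r)) * ennreal (v powr (-(1/2)))"
      using C0 r by (intro ennreal_mult) auto
    finally show ?thesis using dv v0 v1 by simp
  qed simp
  have "ennreal \<bar>Gker a \<sigma> x y t\<bar> = ennreal (1 / (2 * pi * a)) * ennreal (norm (LINT \<tau>|lborel. indicator {0<..<U} \<tau> *\<^sub>R f \<tau>))"
  proof -
    have e: "\<bar>Gker a \<sigma> x y t\<bar> = 1 / (2 * pi * a) * norm (LINT \<tau>|lborel. indicator {0<..<U} \<tau> *\<^sub>R f \<tau>)"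
      unfolding G using a by (simp add: abs_mult)
    show ?thesis unfolding e by (rule ennreal_mult) (use a in auto)
  qed
  also have "\<dots> \<le> ennreal (1 / (2 * pi * a)) * (\<integral>\<^sup>+ \<tau>. ennreal (norm (indicator {0<..<U} \<tau> *\<^sub>R f \<tau>)) \<partial>lborel)"
    by (intro mult_left_mono norm_integral_le_nn) simp
  also have "\<dots> \<le> ennreal (1 / (2 * pi * a)) * (\<integral>\<^sup>+ \<tau>. ennreal (C / sqrt (2*r)) * (if 0 < d \<tau> \<and> d \<tau> \<le> a*t+1 then ennreal (d \<tau> powr (-(1/2))) else 0) \<partial>lborel)"
    by (intro mult_left_mono nn_integral_mono pw) simp
  also have "\<dots> = ennreal (1 / (2 * pi * a)) * (ennreal (C / sqrt (2*r)) * (\<integral>\<^sup>+ \<tau>. (if 0 < d \<tau> \<and> d \<tau> \<le> a*t+1 then ennreal (d \<tau> powr (-(1/2))) else 0) \<partial>lborel))"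
    by (subst nn_integral_cmult) auto
  also have "\<dots> \<le> ennreal (1 / (2 * pi * a)) * (ennreal (C / sqrt (2*r)) * ennreal B)"
  proof (intro mult_left_mono)
    show "(\<integral>\<^sup>+ \<tau>. (if 0 < d \<tau> \<and> d \<tau> \<le> a*t+1 then ennreal (d \<tau> powr (-(1/2))) else 0) \<partial>lborel) \<le> ennreal B"
      unfolding B_def
    proof (rule dyadic)
      show "0 < a * t + 1" using r a by (smt (verit) mult_pos_pos norm_ge_zero)
      fix \<rho> :: real assume \<rho>: "0 < \<rho>" "\<rho> \<le> a*t+1"
      have "\<tau> \<in> {U - \<rho>/a .. U}" if "0 < d \<tau>" "d \<tau> \<le> \<rho>" for \<tau>
      proof -
        have h: "0<\<tau> \<and> \<tau><U" "a*(t-\<tau>) - r \<le> \<rho>" using that by (auto simp: d_def split: if_splits)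
        then have "t - \<tau> \<le> (r+\<rho>)/a" using a by (simp add: field_simps)
        then show ?thesis using h by (simp add: U_def add_divide_distrib)
      qed
      then have "{y\<in>space lborel. 0 < d y \<and> d y \<le> \<rho>} \<subseteq> {U - \<rho>/a .. U}" by auto
      then have "emeasure lborel {y\<in>space lborel. 0 < d y \<and> d y \<le> \<rho>} \<le> emeasure lborel {U - \<rho>/a .. U}"
        by (intro emeasure_mono) auto
      also have "\<dots> = ennreal (1/a * \<rho> powr 1)" using \<rho> a by simp
      finally show "emeasure lborel {y\<in>space lborel. 0 < d y \<and> d y \<le> \<rho>} \<le> ennreal (1/a * \<rho> powr 1)" .
    qed (use a in auto)
  qed auto
  also have "\<dots> = ennreal (1 / (2 * pi * a) * (C / sqrt (2*r)) * B)"
  proof -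
    have c1: "0 \<le> 1 / (2 * pi * a)" and c2: "0 \<le> C / sqrt (2*r)" using a C0 r by auto
    have "ennreal (1 / (2 * pi * a) * (C / sqrt (2*r)) * B) = ennreal (1 / (2 * pi * a)) * ennreal ((C / sqrt (2*r)) * B)"
      by (metis ennreal_mult[OF c1 mult_nonneg_nonneg[OF c2 B0]] mult.assoc)
    also have "ennreal ((C / sqrt (2*r)) * B) = ennreal (C / sqrt (2*r)) * ennreal B"
      by (rule ennreal_mult) (use c2 B0 in auto)
    finally show ?thesis by simp
  qed
  finally have "ennreal \<bar>Gker a \<sigma> x y t\<bar> \<le> ennreal (1 / (2 * pi * a) * (C / sqrt (2*r)) * B)" .
  moreover have "0 \<le> 1 / (2 * pi * a) * (C / sqrt (2*r)) * B" using a C0 B0 r by simp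
  ultimately have "\<bar>Gker a \<sigma> x y t\<bar> \<le> 1 / (2 * pi * a) * (C / sqrt (2*r)) * B"
    by (simp add: ennreal_le_iff)
  then show ?thesis unfolding B_def .
qed

lemma vec_add_sub_self: "(x::real^2) + y - (x - y) = y + y" by (simp add: algebra_simps)

lemma One2_inner: "(One::real^2) \<bullet> b = 1" if "b \<in> Basis" for b
  using that by (simp add: inner_sum_left sum.If_cases inner_Basis)

lemma ball_measure2:
  fixes x :: "real^2" and \<rho> :: real
  assumes "0 < \<rho>"
  shows "emeasure lborel {y\<in>space lborel. 0 < norm (x - y) \<and> norm (x - y) \<le> \<rho>} \<le> ennreal (4 * \<rho> powr 2)"
proof -
  have "{y\<in>space lborel. 0 < norm (x - y) \<and> norm (x - y) \<le> \<rho>} \<subseteq> cbox (x - \<rho> *\<^sub>R One) (x + \<rho> *\<^sub>R One)"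
  proof
    fix y :: "real^2" assume "y \<in> {y\<in>space lborel. 0 < norm (x - y) \<and> norm (x - y) \<le> \<rho>}"
    then have n: "norm (x - y) \<le> \<rho>" by simp
    have "x \<bullet> b - \<rho> \<le> y \<bullet> b \<and> y \<bullet> b \<le> x \<bullet> b + \<rho>" if "b \<in> Basis" for b
    proof -
      have "\<bar>(x - y) \<bullet> b\<bar> \<le> \<rho>" using Basis_le_norm[OF that, of "x - y"] n by linarith
      then show ?thesis by (auto simp: inner_diff_left)
    qed
    then show "y \<in> cbox (x - \<rho> *\<^sub>R One) (x + \<rho> *\<^sub>R One)"
      using One2_inner by (auto simp: mem_box inner_diff_left inner_add_left)
  qed
  then have "emeasure lborel {y\<in>space lborel. 0 < norm (x - y) \<and> norm (x - y) \<le> \<rho>} \<le> emeasure lborel (cbox (x - \<rho> *\<^sub>R One) (x + \<rho> *\<^sub>R One))"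
    by (intro emeasure_mono) auto
  also have "\<dots> = ennreal (4 * \<rho> powr 2)"
  proof -
    note One1 = One2_inner
    have w: "(x + \<rho> *\<^sub>R One - (x - \<rho> *\<^sub>R One)) \<bullet> b = 2*\<rho>" if "b \<in> Basis" for b
    proof -
      have "x + \<rho> *\<^sub>R One - (x - \<rho> *\<^sub>R One) = (2*\<rho>) *\<^sub>R (One::real^2)"
        unfolding vec_add_sub_self mult_2 scaleR_add_left ..
      then show ?thesis using One1[OF that] by (simp add: inner_scaleR_left)
    qed
    have le: "\<forall>b\<in>Basis. (x - \<rho> *\<^sub>R One) \<bullet> b \<le> (x + \<rho> *\<^sub>R One) \<bullet> b"
      using One1 assms by (simp add: inner_diff_left inner_add_left)
    have "(\<Prod>b\<in>Basis. (x + \<rho> *\<^sub>R One - (x - \<rho> *\<^sub>R One)) \<bullet> b) = (\<Prod>b\<in>(Basis::(real^2) set). 2*\<rho>)"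
      by (rule prod.cong[OF refl w])
    also have "\<dots> = (2*\<rho>)^2" by simp
    also have "\<dots> = 4 * \<rho> powr 2" using assms by (simp add: powr_numeral power2_eq_square)
    finally have pr: "(\<Prod>b\<in>Basis. (x + \<rho> *\<^sub>R One - (x - \<rho> *\<^sub>R One)) \<bullet> b) = 4 * \<rho> powr 2" .
    show ?thesis unfolding emeasure_lborel_cbox_eq if_P[OF le] pr ..
  qed
  finally show ?thesis .
qed

theorem theorem1:
  fixes \<alpha> a C :: real and \<sigma> :: "real^2 \<Rightarrow> real \<Rightarrow> real"
  assumes "0 < \<alpha>" "\<alpha> < 2" "0 < a"
    and "(\<lambda>p. \<sigma> (fst p) (snd p)) \<in> borel_measurable (restrict_space borel (UNIV \<times> {0..}))"
    and "\<forall>x t. t \<ge> 0 \<longrightarrow> \<bar>\<sigma> x t\<bar> \<le> C"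
  shows "\<forall>t \<ge> 0. \<forall>x :: real^2.
           (\<lambda>y. Gker a \<sigma> x y t) \<in> borel_measurable lborel \<and>
           (\<integral>\<^sup>+ y. ennreal (\<bar>Gker a \<sigma> x y t\<bar> powr \<alpha>) \<partial>lborel) < \<infinity>"
proof (intro allI impI conjI)
  fix t :: real and x :: "real^2" assume t: "t \<ge> 0"
  have a: "0 < a" and al: "0 < \<alpha>" "\<alpha> < 2" and sb: "\<forall>x t. t \<ge> 0 \<longrightarrow> \<bar>\<sigma> x t\<bar> \<le> C"
    using assms by auto
  show "(\<lambda>y. Gker a \<sigma> x y t) \<in> borel_measurable lborel"
    by (rule G_measurable) (use assms in auto)
  define B1 where "B1 = (\<Sum>k. (1/a) * 2 powr (1/2) * (a*t+1) powr (1 - 1/2) * (2 powr (1/2 - 1))^k)"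
  have "norm (2 powr (1/2 - 1) :: real) < 1"
  proof -
    have "(2::real) powr (1/2 - 1) < 2 powr 0" by (intro powr_less_mono) auto
    then show ?thesis by simp
  qed
  then have B0: "0 \<le> B1" unfolding B1_def using a t
    by (intro suminf_nonneg summable_mult summable_geometric) auto
  have C0: "0 \<le> C" using sb by (metis abs_ge_zero order.trans order_refl)
  define K1 where "K1 = 1/(2*pi*a) * (C / sqrt 2) * B1"
  have K1: "0 \<le> K1" unfolding K1_def using a C0 B0 by simp
  have bnd: "\<bar>Gker a \<sigma> x y t\<bar> \<le> K1 * norm (x - y) powr (-(1/2))"
    if y: "0 < norm (x - y)" "norm (x - y) < a * t" for y
  proof -
    have "\<bar>Gker a \<sigma> x y t\<bar> \<le> 1 / (2 * pi * a) * (C / sqrt (2 * norm (x - y))) * B1"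
      unfolding B1_def by (rule G_bound1[OF a sb refl y])
    also have "\<dots> = K1 * norm (x - y) powr (-(1/2))"
      using y unfolding K1_def by (simp add: powr_minus powr_half_sqrt real_sqrt_mult divide_simps)
    finally show ?thesis .
  qed
  have pw: "AE y in lborel. ennreal (\<bar>Gker a \<sigma> x y t\<bar> powr \<alpha>) \<le> ennreal (K1 powr \<alpha>) *
     (if 0 < norm (x - y) \<and> norm (x - y) \<le> a*t+1 then ennreal (norm (x - y) powr (-(\<alpha>/2))) else 0)"
    using AE_lborel_singleton[of x]
  proof eventually_elim
    fix y assume yx: "y \<noteq> x"
    show "ennreal (\<bar>Gker a \<sigma> x y t\<bar> powr \<alpha>) \<le> ennreal (K1 powr \<alpha>) *
     (if 0 < norm (x - y) \<and> norm (x - y) \<le> a*t+1 then ennreal (norm (x - y) powr (-(\<alpha>/2))) else 0)"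
    proof (cases "norm (x - y) < a * t")
      case True
      have r0: "0 < norm (x - y)" using yx by simp
      have "\<bar>Gker a \<sigma> x y t\<bar> powr \<alpha> \<le> (K1 * norm (x - y) powr (-(1/2))) powr \<alpha>"
        using bnd[OF r0 True] al by (intro powr_mono2) auto
      also have "\<dots> = K1 powr \<alpha> * norm (x - y) powr (-(\<alpha>/2))"
        using K1 by (simp add: powr_mult powr_powr)
      finally have "ennreal (\<bar>Gker a \<sigma> x y t\<bar> powr \<alpha>) \<le> ennreal (K1 powr \<alpha> * norm (x - y) powr (-(\<alpha>/2)))"
        by (rule ennreal_leI)
      also have "\<dots> = ennreal (K1 powr \<alpha>) * ennreal (norm (x - y) powr (-(\<alpha>/2)))"
        by (rule ennreal_mult) auto
      finally show ?thesis using r0 True by simp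
    next
      case False
      then have "Gker a \<sigma> x y t = 0" unfolding Gker_def by simp
      then show ?thesis using al by simp
    qed
  qed
  have "(\<integral>\<^sup>+ y. ennreal (\<bar>Gker a \<sigma> x y t\<bar> powr \<alpha>) \<partial>lborel) \<le>
    (\<integral>\<^sup>+ y. ennreal (K1 powr \<alpha>) * (if 0 < norm (x - y) \<and> norm (x - y) \<le> a*t+1 then ennreal (norm (x - y) powr (-(\<alpha>/2))) else 0) \<partial>lborel)"
    by (rule nn_integral_mono_AE[OF pw])
  also have "\<dots> = ennreal (K1 powr \<alpha>) * (\<integral>\<^sup>+ y. (if 0 < norm (x - y) \<and> norm (x - y) \<le> a*t+1 then ennreal (norm (x - y) powr (-(\<alpha>/2))) else 0) \<partial>lborel)"
    by (subst nn_integral_cmult) auto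
  also have "\<dots> \<le> ennreal (K1 powr \<alpha>) * ennreal (\<Sum>k. 4 * 2 powr (\<alpha>/2) * (a*t+1) powr (2 - \<alpha>/2) * (2 powr (\<alpha>/2 - 2))^k)"
  proof (intro mult_left_mono)
    show "(\<integral>\<^sup>+ y. (if 0 < norm (x - y) \<and> norm (x - y) \<le> a*t+1 then ennreal (norm (x - y) powr (-(\<alpha>/2))) else 0) \<partial>lborel)
       \<le> ennreal (\<Sum>k. 4 * 2 powr (\<alpha>/2) * (a*t+1) powr (2 - \<alpha>/2) * (2 powr (\<alpha>/2 - 2))^k)"
    proof (rule dyadic[where d = "\<lambda>y. norm (x - y)"])
      show "0 < a * t + 1" using a t by (simp add: add_nonneg_pos)
      show "\<alpha>/2 < 2" using al by simp
      fix \<rho> :: real assume rho: "0 < \<rho>" "\<rho> \<le> a * t + 1"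
      show "emeasure lborel {y\<in>space lborel. 0 < norm (x - y) \<and> norm (x - y) \<le> \<rho>} \<le> ennreal (4 * \<rho> powr 2)"
        using rho(1) by (rule ball_measure2)
    qed (use al in auto)
  qed auto
  also have "\<dots> < \<infinity>" by (simp add: ennreal_mult_less_top)
  finally show "(\<integral>\<^sup>+ y. ennreal (\<bar>Gker a \<sigma> x y t\<bar> powr \<alpha>) \<partial>lborel) < \<infinity>" .
qed

end
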